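(* Let $\mathcal H$ be a Hilbert space of finite dimension $d$, let $\{|e_s\rangle\}_{s=0}^{d-1}$ be an orthonormal basis of $\mathcal H$, let $\{\lambda_s\}_{s=0}^{d-1}$ be a probability distribution, and let $V=\sum_{s=0}^{d-1}\exp\!\left(i\frac{2\pi s}{d}\right)|e_s\rangle\langle e_s|$. Let $\Phi$ be the phase damping channel $\Phi(\rho)=\sum_{j=0}^{d-1}\lambda_j V^j\rho V^{*j}$ on $\mathfrak S(\mathcal H)$. Let $\mathcal A$ be the set of states on $\mathcal H$ that can be written as convex combinations of pure states $|f\rangle\langle f|$ satisfying $|\langle f|e_s\rangle|=\frac{1}{\sqrt d}$ for all $0\le s\le d-1$. Then for every $\rho\in\mathcal A$, $$H_\Phi(\rho)\le -\sum_{j=0}^{d-1}\lambda_j\log\lambda_j .$$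
   Context: $\mathfrak S(\mathcal H)$ denotes the set of density operators (positive, unit-trace operators) on $\mathcal H$, and $S(\sigma)=-\mathrm{Tr}(\sigma\log\sigma)$ is the von Neumann entropy. For a quantum channel (completely positive trace-preserving linear map) $\Phi$ with input space $\mathcal H$, and $\rho\in\mathfrak S(\mathcal H)$, $H_\Phi(\rho):=\min\sum_{j=1}^k\pi_jS(\Phi(\rho_j))$, where the minimum is over all finite decompositions $\rho=\sum_{j=1}^k\pi_j\rho_j$ with $\{\pi_j\}$ a probability distribution and $\rho_j\in\mathfrak S(\mathcal H)$. *)

theory Defs
  imports "Jordan_Normal_Form.Char_Poly" "Jordan_Normal_Form.Schur_Decomposition"
begin

(* Hilbert space H of dimension d is modelled as complex^d (complex vec of dim d);
   operators are d x d complex matrices. *)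

definition braket :: "complex vec \<Rightarrow> complex vec \<Rightarrow> complex" where
  "braket f g = (\<Sum>i<dim_vec f. cnj (f $ i) * g $ i)"

definition ketbra :: "complex vec \<Rightarrow> complex vec \<Rightarrow> complex mat" where
  "ketbra u v = mat (dim_vec u) (dim_vec v) (\<lambda>(i,j). u $ i * cnj (v $ j))"

definition mtrace :: "complex mat \<Rightarrow> complex" where
  "mtrace A = (\<Sum>i<dim_row A. A $$ (i,i))"

definition msum :: "nat \<Rightarrow> nat \<Rightarrow> (nat \<Rightarrow> complex mat) \<Rightarrow> complex mat" where
  "msum d k F = mat d d (\<lambda>ij. \<Sum>j<k. F j $$ ij)"

definition positive_op :: "nat \<Rightarrow> complex mat \<Rightarrow> bool" where
  "positive_op d A \<longleftrightarrow> A \<in> carrier_mat d d \<and>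
     (\<forall>v \<in> carrier_vec d. Im (braket v (A *\<^sub>v v)) = 0 \<and> Re (braket v (A *\<^sub>v v)) \<ge> 0)"

definition density :: "nat \<Rightarrow> complex mat \<Rightarrow> bool" where
  "density d \<rho> \<longleftrightarrow> positive_op d \<rho> \<and> mtrace \<rho> = 1"

(* eigenvalues counted with algebraic multiplicity (roots of the characteristic polynomial);
   the multiset is unique, so the sums below do not depend on the choice *)
definition eigvals :: "complex mat \<Rightarrow> complex list" where
  "eigvals A = (SOME as. char_poly A = (\<Prod>a\<leftarrow>as. [:- a, 1:]) \<and> length as = dim_row A)"

(* von Neumann entropy S(sigma) = - Tr(sigma log sigma) = - sum mu log mu over eigenvalues;
   note 0 * ln 0 = 0 in Isabelle, matching the convention 0 log 0 = 0 *)
definition vN_entropy :: "complex mat \<Rightarrow> real" where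
  "vN_entropy \<sigma> = - (\<Sum>a\<leftarrow>eigvals \<sigma>. Re a * ln (Re a))"

definition H_Phi :: "nat \<Rightarrow> (complex mat \<Rightarrow> complex mat) \<Rightarrow> complex mat \<Rightarrow> real" where
  "H_Phi d \<Phi> \<rho> = Inf {(\<Sum>j<k. p j * vN_entropy (\<Phi> (\<sigma> j))) | k p \<sigma>.
      (\<forall>j<k. p j \<ge> 0 \<and> density d (\<sigma> j)) \<and> (\<Sum>j<k. p j) = 1 \<and>
      \<rho> = msum d k (\<lambda>j. complex_of_real (p j) \<cdot>\<^sub>m \<sigma> j)}"

definition orthonormal_basis :: "nat \<Rightarrow> (nat \<Rightarrow> complex vec) \<Rightarrow> bool" where
  "orthonormal_basis d e \<longleftrightarrow> (\<forall>s<d. e s \<in> carrier_vec d) \<and>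
     (\<forall>s<d. \<forall>t<d. braket (e s) (e t) = (if s = t then 1 else 0))"

definition phaseV :: "nat \<Rightarrow> (nat \<Rightarrow> complex vec) \<Rightarrow> complex mat" where
  "phaseV d e = msum d d (\<lambda>s. exp (\<i> * complex_of_real (2 * pi * real s / real d)) \<cdot>\<^sub>m ketbra (e s) (e s))"

definition phase_damping :: "nat \<Rightarrow> (nat \<Rightarrow> complex vec) \<Rightarrow> (nat \<Rightarrow> real) \<Rightarrow> complex mat \<Rightarrow> complex mat" where
  "phase_damping d e lam \<rho> = msum d d (\<lambda>j. complex_of_real (lam j) \<cdot>\<^sub>m
      ((phaseV d e ^\<^sub>m j) * \<rho> * mat_adjoint (phaseV d e ^\<^sub>m j)))"

definition mub_states :: "nat \<Rightarrow> (nat \<Rightarrow> complex vec) \<Rightarrow> complex mat set" where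
  "mub_states d e = {msum d k (\<lambda>j. complex_of_real (p j) \<cdot>\<^sub>m ketbra (f j) (f j)) | k p f.
      (\<forall>j<k. p j \<ge> 0 \<and> f j \<in> carrier_vec d \<and>
          (\<forall>s<d. cmod (braket (f j) (e s)) = 1 / sqrt (real d))) \<and>
      (\<Sum>j<k. p j) = 1}"

end

theory Submission
  imports Defs "Berlekamp_Zassenhaus.Mahler_Measure"
begin


lemma mult_entry:
  assumes "A \<in> carrier_mat n m" "B \<in> carrier_mat m p" "i < n" "j < p"
  shows "(A * B) $$ (i,j) = (\<Sum>k<m. A $$ (i,k) * B $$ (k,j))"
  using assms by (auto simp: scalar_prod_def lessThan_atLeast0 intro!: sum.cong)

lemma mv_entry:
  assumes "A \<in> carrier_mat n m" "v \<in> carrier_vec m" "i < n"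
  shows "(A *\<^sub>v v) $ i = (\<Sum>k<m. A $$ (i,k) * v $ k)"
  using assms by (auto simp: scalar_prod_def lessThan_atLeast0 intro!: sum.cong)

lemma adj_carrier: "A \<in> carrier_mat n m \<Longrightarrow> mat_adjoint A \<in> carrier_mat m n"
  by (auto simp: mat_adjoint_def)

lemma adj_entry:
  assumes "A \<in> carrier_mat n m" "i < m" "j < n"
  shows "mat_adjoint A $$ (i,j) = cnj (A $$ (j,i))"
  using assms by (auto simp: mat_adjoint_def mat_of_rows_def)

lemma msum_carrier: "msum d k F \<in> carrier_mat d d"
  by (auto simp: msum_def)

lemma msum_entry: "i < d \<Longrightarrow> j < d \<Longrightarrow> msum d k F $$ (i,j) = (\<Sum>l<k. F l $$ (i,j))"
  by (auto simp: msum_def)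

lemma ketbra_carrier: "u \<in> carrier_vec n \<Longrightarrow> ketbra u u \<in> carrier_mat n n"
  by (auto simp: ketbra_def)

lemma ketbra_entry: "u \<in> carrier_vec n \<Longrightarrow> i < n \<Longrightarrow> j < n \<Longrightarrow> ketbra u u $$ (i,j) = u $ i * cnj (u $ j)"
  by (auto simp: ketbra_def)

lemma braket_carrier: "f \<in> carrier_vec n \<Longrightarrow> braket f g = (\<Sum>i<n. cnj (f $ i) * g $ i)"
  by (auto simp: braket_def)

definition w :: "nat \<Rightarrow> nat \<Rightarrow> complex" where
  "w d s = exp (\<i> * complex_of_real (2 * pi * real s / real d))"

context
  fixes d :: nat and e :: "nat \<Rightarrow> complex vec"
  assumes ON: "orthonormal_basis d e"
begin

lemma e_carrier: "s < d \<Longrightarrow> e s \<in> carrier_vec d"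
  using ON by (auto simp: orthonormal_basis_def)

lemma e_dim: "s < d \<Longrightarrow> dim_vec (e s) = d"
  using e_carrier by auto

lemma e_orth: "s < d \<Longrightarrow> t < d \<Longrightarrow> (\<Sum>i<d. cnj (e s $ i) * e t $ i) = (if s = t then 1 else 0)"
proof -
  assume st: "s < d" "t < d"
  have "braket (e s) (e t) = (if s = t then 1 else 0)" using ON st by (auto simp: orthonormal_basis_def)
  thus ?thesis using e_carrier[OF st(1)] by (simp add: braket_def)
qed

definition Emat where "Emat = mat d d (\<lambda>(i,s). e s $ i)"

lemma Emat_entry: "i < d \<Longrightarrow> s < d \<Longrightarrow> Emat $$ (i,s) = e s $ i" by (simp add: Emat_def)

lemma complete: "a < d \<Longrightarrow> b < d \<Longrightarrow> (\<Sum>s<d. e s $ a * cnj (e s $ b)) = (if a = b then 1 else 0)"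
proof -
  assume ab: "a < d" "b < d"
  have EC: "Emat \<in> carrier_mat d d" by (simp add: Emat_def)
  have "mat_adjoint Emat * Emat = 1\<^sub>m d"
  proof (rule eq_matI)
    fix i j assume ij: "i < dim_row (1\<^sub>m d :: complex mat)" "j < dim_col (1\<^sub>m d :: complex mat)"
    hence "(mat_adjoint Emat * Emat) $$ (i,j) = (\<Sum>k<d. mat_adjoint Emat $$ (i,k) * Emat $$ (k,j))"
      using mult_entry[OF adj_carrier[OF EC] EC] by auto
    also have "\<dots> = (\<Sum>k<d. cnj (e i $ k) * e j $ k)"
      using ij by (intro sum.cong, auto simp: adj_entry[OF EC] Emat_entry)
    finally show "(mat_adjoint Emat * Emat) $$ (i,j) = 1\<^sub>m d $$ (i,j)"
      using ij e_orth by auto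
  qed (auto simp: Emat_def mat_adjoint_def)
  hence "Emat * mat_adjoint Emat = 1\<^sub>m d"
    using mat_mult_left_right_inverse[OF adj_carrier[OF EC] EC] by auto
  hence "(Emat * mat_adjoint Emat) $$ (a,b) = (if a = b then 1 else 0)" using ab by auto
  moreover have "(Emat * mat_adjoint Emat) $$ (a,b) = (\<Sum>s<d. e s $ a * cnj (e s $ b))"
    using ab by (subst mult_entry[OF EC adj_carrier[OF EC]], auto intro!: sum.cong simp: adj_entry[OF EC] Emat_entry)
  ultimately show ?thesis by simp
qed


lemma V_carrier: "phaseV d e \<in> carrier_mat d d"
  by (simp add: phaseV_def msum_carrier)

lemma V_entry: "a < d \<Longrightarrow> b < d \<Longrightarrow> phaseV d e $$ (a,b) = (\<Sum>s<d. w d s * (e s $ a * cnj (e s $ b)))"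
  unfolding phaseV_def w_def
  by (subst msum_entry, auto intro!: sum.cong simp: ketbra_def e_dim)

lemma Vpow_entry: "a < d \<Longrightarrow> b < d \<Longrightarrow> (phaseV d e ^\<^sub>m j) $$ (a,b) = (\<Sum>s<d. w d s ^ j * (e s $ a * cnj (e s $ b)))"
proof (induction j arbitrary: a b)
  case 0
  then show ?case using V_carrier complete[of a b] by auto
next
  case (Suc j)
  have PC: "phaseV d e ^\<^sub>m j \<in> carrier_mat d d" using V_carrier by simp
  have "(phaseV d e ^\<^sub>m Suc j) $$ (a,b) = (\<Sum>k<d. (phaseV d e ^\<^sub>m j) $$ (a,k) * phaseV d e $$ (k,b))"
    using Suc.prems by (simp, subst mult_entry[OF PC V_carrier], auto)
  also have "\<dots> = (\<Sum>k<d. (\<Sum>s<d. w d s ^ j * (e s $ a * cnj (e s $ k))) * (\<Sum>t<d. w d t * (e t $ k * cnj (e t $ b))))"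
    using Suc by (intro sum.cong, auto simp: V_entry)
  also have "\<dots> = (\<Sum>k<d. \<Sum>s<d. \<Sum>t<d. (w d s ^ j * w d t * e s $ a * cnj (e t $ b)) * (cnj (e s $ k) * e t $ k))"
    by (rule sum.cong[OF refl], subst sum_product, rule sum.cong[OF refl], rule sum.cong[OF refl], simp only: mult_ac)
  also have "\<dots> = (\<Sum>s<d. \<Sum>k<d. \<Sum>t<d. (w d s ^ j * w d t * e s $ a * cnj (e t $ b)) * (cnj (e s $ k) * e t $ k))"
    by (rule sum.swap)
  also have "\<dots> = (\<Sum>s<d. \<Sum>t<d. \<Sum>k<d. (w d s ^ j * w d t * e s $ a * cnj (e t $ b)) * (cnj (e s $ k) * e t $ k))"
    by (rule sum.cong[OF refl], rule sum.swap)
  also have "\<dots> = (\<Sum>s<d. \<Sum>t<d. (w d s ^ j * w d t * e s $ a * cnj (e t $ b)) * (\<Sum>k<d. cnj (e s $ k) * e t $ k))"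
    by (simp only: sum_distrib_left)
  also have "\<dots> = (\<Sum>s<d. \<Sum>t<d. (w d s ^ j * w d t * e s $ a * cnj (e t $ b)) * (if s = t then 1 else 0))"
    by (intro sum.cong refl, simp add: e_orth)
  also have "\<dots> = (\<Sum>s<d. w d s ^ Suc j * (e s $ a * cnj (e s $ b)))"
    by (simp add: mult_ac if_distrib sum.delta cong: if_cong)
  finally show ?case .
qed

end




lemma w_cis: "w d s = cis (2 * pi * real s / real d)"
  by (simp add: w_def cis_conv_exp)

lemma rootsum:
  assumes dpos: "d > 0" and jk: "j < d" "k < d"
  shows "(\<Sum>s<d. cnj (w d s) ^ j * w d s ^ k) = (if j = k then of_nat d else 0)"
proof -
  define \<theta> where "\<theta> = 2 * pi * (real k - real j) / real d"
  have wterm: "cnj (w d s) ^ j * w d s ^ k = cis \<theta> ^ s" for s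
  proof -
    have "cnj (w d s) ^ j * w d s ^ k = cis (real j * (- (2 * pi * real s / real d)) + real k * (2 * pi * real s / real d))"
      by (simp add: w_cis cis_cnj DeMoivre cis_mult)
    also have "real j * (- (2 * pi * real s / real d)) + real k * (2 * pi * real s / real d) = real s * \<theta>"
    by (simp add: \<theta>_def diff_divide_distrib algebra_simps)
    finally show ?thesis by (simp add: DeMoivre)
  qed
  have sum_eq: "(\<Sum>s<d. cnj (w d s) ^ j * w d s ^ k) = (\<Sum>s<d. cis \<theta> ^ s)"
    by (simp add: wterm)
  show ?thesis
  proof (cases "j = k")
    case True
    then have "\<theta> = 0" by (simp add: \<theta>_def)
    then show ?thesis using sum_eq True by simp
  next
    case False
    have ne: "cis \<theta> \<noteq> 1"
    proof
      assume "cis \<theta> = 1"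
      then have "cos \<theta> = 1" by (metis Re_complex_of_real cis.sel(1) complex_Re_of_int one_complex.sel(1))
      then obtain m :: int where m: "\<theta> = real_of_int m * 2 * pi" using cos_one_2pi_int by auto
      then have "2*pi*(real k - real j) = 2*pi*(real_of_int m * real d)"
        using dpos by (simp add: \<theta>_def field_simps)
      then have "real k - real j = real_of_int m * real d"
        by simp
      then have "int k - int j = m * int d" by (metis of_int_eq_iff of_int_mult of_int_diff of_int_of_nat_eq)
      moreover have "\<bar>int k - int j\<bar> < int d" using jk by auto
      ultimately have "\<bar>m\<bar> * int d < 1 * int d" by (simp add: abs_mult)
      then have "\<bar>m\<bar> < 1" using dpos by (simp add: mult_less_cancel_right)
      then have "m = 0" by simp
      then show False using False \<open>int k - int j = m * int d\<close> by simp
    qed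
    have "cis \<theta> ^ d = cis (2 * pi * (real k - real j))"
      using dpos by (simp add: DeMoivre \<theta>_def)
    also have "\<dots> = 1"
      by (rule cis_multiple_2pi, simp add: Ints_diff)
    finally have "cis \<theta> ^ d = 1" .
    then show ?thesis using sum_eq False ne by (simp add: sum_gp_strict)
  qed
qed

lemma sandwich:
  assumes M: "M \<in> carrier_mat n n" and f: "f \<in> carrier_vec n"
  shows "M * ketbra f f * mat_adjoint M = ketbra (M *\<^sub>v f) (M *\<^sub>v f)"
proof -
  have K: "ketbra f f \<in> carrier_mat n n" using f by (rule ketbra_carrier)
  have MK: "M * ketbra f f \<in> carrier_mat n n" using M K by auto
  have Mf: "M *\<^sub>v f \<in> carrier_vec n" using M f by auto
  show ?thesis
  proof (rule eq_matI)
    fix a b assume ab: "a < dim_row (ketbra (M *\<^sub>v f) (M *\<^sub>v f))" "b < dim_col (ketbra (M *\<^sub>v f) (M *\<^sub>v f))"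
    hence ab: "a < n" "b < n" using Mf M by (auto simp: ketbra_def)
    have "(M * ketbra f f * mat_adjoint M) $$ (a,b) = (\<Sum>k<n. (M * ketbra f f) $$ (a,k) * mat_adjoint M $$ (k,b))"
      using ab by (rule mult_entry[OF MK adj_carrier[OF M]])
    also have "\<dots> = (\<Sum>k<n. (\<Sum>l<n. M $$ (a,l) * (f $ l * cnj (f $ k))) * cnj (M $$ (b,k)))"
      using ab by (intro sum.cong refl, simp add: mult_entry[OF M K] adj_entry[OF M] ketbra_entry[OF f])
    also have "\<dots> = (\<Sum>k<n. \<Sum>l<n. (M $$ (a,l) * f $ l) * cnj (M $$ (b,k) * f $ k))"
      by (intro sum.cong refl, subst sum_distrib_right, intro sum.cong refl, simp add: mult_ac)
    also have "\<dots> = (\<Sum>l<n. \<Sum>k<n. (M $$ (a,l) * f $ l) * cnj (M $$ (b,k) * f $ k))"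
      by (rule sum.swap)
    also have "\<dots> = (\<Sum>l<n. M $$ (a,l) * f $ l) * cnj (\<Sum>k<n. M $$ (b,k) * f $ k)"
      by (simp only: cnj_sum sum_product)
    also have "\<dots> = ketbra (M *\<^sub>v f) (M *\<^sub>v f) $$ (a,b)"
      using ab by (simp add: ketbra_entry[OF Mf] mv_entry[OF M f])
    finally show "(M * ketbra f f * mat_adjoint M) $$ (a,b) = ketbra (M *\<^sub>v f) (M *\<^sub>v f) $$ (a,b)" .
  qed (use M Mf in \<open>auto simp: ketbra_def mat_adjoint_def\<close>)
qed

context
  fixes d :: nat and e :: "nat \<Rightarrow> complex vec"
  assumes ON: "orthonormal_basis d e" and dpos: "d > 0"
begin

lemma Vpow_mv:
  assumes f: "f \<in> carrier_vec d" and a: "a < d"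
  shows "(phaseV d e ^\<^sub>m j *\<^sub>v f) $ a = (\<Sum>s<d. w d s ^ j * braket (e s) f * e s $ a)"
proof -
  have PC: "phaseV d e ^\<^sub>m j \<in> carrier_mat d d" using V_carrier[OF ON] by simp
  have "(phaseV d e ^\<^sub>m j *\<^sub>v f) $ a = (\<Sum>k<d. (\<Sum>s<d. w d s ^ j * (e s $ a * cnj (e s $ k))) * f $ k)"
    by (subst mv_entry[OF PC f a], intro sum.cong refl, simp add: Vpow_entry[OF ON] a)
  also have "\<dots> = (\<Sum>k<d. \<Sum>s<d. (w d s ^ j * e s $ a) * (cnj (e s $ k) * f $ k))"
    by (intro sum.cong refl, simp add: sum_distrib_right sum_distrib_left mult_ac)
  also have "\<dots> = (\<Sum>s<d. \<Sum>k<d. (w d s ^ j * e s $ a) * (cnj (e s $ k) * f $ k))"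
    by (rule sum.swap)
  also have "\<dots> = (\<Sum>s<d. w d s ^ j * braket (e s) f * e s $ a)"
  proof (intro sum.cong refl)
    fix s assume "s \<in> {..<d}"
    then have br: "braket (e s) f = (\<Sum>k<d. cnj (e s $ k) * f $ k)"
      using braket_carrier e_carrier[OF ON] by auto
    have "w d s ^ j * braket (e s) f * e s $ a = (w d s ^ j * e s $ a) * (\<Sum>k<d. cnj (e s $ k) * f $ k)"
      by (simp only: br mult_ac)
    also have "\<dots> = (\<Sum>k<d. (w d s ^ j * e s $ a) * (cnj (e s $ k) * f $ k))"
      by (rule sum_distrib_left)
    finally show "(\<Sum>k<d. (w d s ^ j * e s $ a) * (cnj (e s $ k) * f $ k)) = w d s ^ j * braket (e s) f * e s $ a" by simp
  qed
  finally show ?thesis .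
qed

end

lemma eigvals_mset:
  assumes A: "A \<in> carrier_mat n n" and cp: "char_poly A = (\<Prod>a\<leftarrow>bs. [:- a, 1:])"
  shows "mset (eigvals A) = mset bs"
proof -
  have ex: "\<exists>as. char_poly A = (\<Prod>a\<leftarrow>as. [:- a, 1:]) \<and> length as = dim_row A"
    using char_poly_factorized[OF A] A by auto
  from someI_ex[OF ex] have "char_poly A = (\<Prod>a\<leftarrow>eigvals A. [:- a, 1:])"
    unfolding eigvals_def by blast
  with cp have "(\<Prod>a\<leftarrow>eigvals A. [:- a, 1:]) = (\<Prod>a\<leftarrow>bs. [:- a, 1:])" by simp
  then show ?thesis by (rule reconstruct_poly_monic_defines_mset)
qed

lemma vN_char:
  assumes A: "A \<in> carrier_mat n n" and cp: "char_poly A = (\<Prod>a\<leftarrow>bs. [:- a, 1:])"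
  shows "vN_entropy A = - (\<Sum>a\<leftarrow>bs. Re a * ln (Re a))"
proof -
  let ?h = "\<lambda>a::complex. Re a * ln (Re a)"
  have "mset (map ?h (eigvals A)) = mset (map ?h bs)" using eigvals_mset[OF A cp] by simp
  then have "sum_mset (mset (map ?h (eigvals A))) = sum_mset (mset (map ?h bs))" by (rule arg_cong)
  then show ?thesis unfolding vN_entropy_def sum_mset_sum_list by simp
qed

context
  fixes d :: nat and e :: "nat \<Rightarrow> complex vec"
  assumes ON: "orthonormal_basis d e" and dpos: "d > 0"
begin

definition Gm :: "complex vec \<Rightarrow> complex mat" where
  "Gm f = mat d d (\<lambda>(a,j). (phaseV d e ^\<^sub>m j *\<^sub>v f) $ a)"

lemma Gm_carrier: "Gm f \<in> carrier_mat d d" by (simp add: Gm_def)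

lemma Gm_entry: "f \<in> carrier_vec d \<Longrightarrow> a < d \<Longrightarrow> j < d \<Longrightarrow> Gm f $$ (a,j) = (\<Sum>s<d. w d s ^ j * braket (e s) f * e s $ a)"
  by (simp add: Gm_def Vpow_mv[OF ON dpos])

lemma Gm_unitary:
  assumes f: "f \<in> carrier_vec d" and mub: "\<forall>s<d. cmod (braket f (e s)) = 1 / sqrt (real d)"
  shows "mat_adjoint (Gm f) * Gm f = 1\<^sub>m d"
proof (rule eq_matI)
  note GC = Gm_carrier[of f]
  define c where "c s = braket (e s) f" for s
  have cc: "cnj (c s) * c s = 1 / of_nat d" if s: "s < d" for s
  proof -
    have "c s = cnj (braket f (e s))" using f e_carrier[OF ON s]
      by (simp add: c_def braket_carrier cnj_sum mult.commute)
    hence "cmod (c s) = 1 / sqrt (real d)" using mub s by simp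
    hence "cmod (c s) ^ 2 = 1 / real d" by (simp add: power_divide)
    hence "complex_of_real (cmod (c s) ^ 2) = 1 / of_nat d" by simp
    thus ?thesis by (metis complex_norm_square mult.commute)
  qed
  fix j k assume jk: "j < dim_row (1\<^sub>m d :: complex mat)" "k < dim_col (1\<^sub>m d :: complex mat)"
  hence jk: "j < d" "k < d" by auto
  have "(mat_adjoint (Gm f) * Gm f) $$ (j,k) = (\<Sum>a<d. cnj (Gm f $$ (a,j)) * Gm f $$ (a,k))"
    using jk by (subst mult_entry[OF adj_carrier[OF GC] GC], auto intro!: sum.cong simp: adj_entry[OF GC])
  also have "\<dots> = (\<Sum>a<d. cnj (\<Sum>s<d. w d s ^ j * c s * e s $ a) * (\<Sum>t<d. w d t ^ k * c t * e t $ a))"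
    using jk f by (intro sum.cong refl, simp add: Gm_entry c_def)
  also have "\<dots> = (\<Sum>a<d. \<Sum>s<d. \<Sum>t<d. (cnj (w d s ^ j * c s) * (w d t ^ k * c t)) * (cnj (e s $ a) * e t $ a))"
    by (intro sum.cong refl, simp only: cnj_sum sum_product, intro sum.cong refl, simp add: mult_ac)
  also have "\<dots> = (\<Sum>s<d. \<Sum>a<d. \<Sum>t<d. (cnj (w d s ^ j * c s) * (w d t ^ k * c t)) * (cnj (e s $ a) * e t $ a))"
    by (rule sum.swap)
  also have "\<dots> = (\<Sum>s<d. \<Sum>t<d. \<Sum>a<d. (cnj (w d s ^ j * c s) * (w d t ^ k * c t)) * (cnj (e s $ a) * e t $ a))"
    by (rule sum.cong[OF refl], rule sum.swap)
  also have "\<dots> = (\<Sum>s<d. \<Sum>t<d. (cnj (w d s ^ j * c s) * (w d t ^ k * c t)) * (\<Sum>a<d. cnj (e s $ a) * e t $ a))"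
    by (simp only: sum_distrib_left)
  also have "\<dots> = (\<Sum>s<d. \<Sum>t<d. (cnj (w d s ^ j * c s) * (w d t ^ k * c t)) * (if s = t then 1 else 0))"
    by (intro sum.cong refl, simp add: e_orth[OF ON])
  also have "\<dots> = (\<Sum>s<d. cnj (w d s ^ j * c s) * (w d s ^ k * c s))"
    by (simp add: if_distrib sum.delta cong: if_cong)
  also have "\<dots> = (\<Sum>s<d. (cnj (w d s) ^ j * w d s ^ k) * (cnj (c s) * c s))"
    by (intro sum.cong refl, simp add: mult_ac)
  also have "\<dots> = (\<Sum>s<d. cnj (w d s) ^ j * w d s ^ k) * (1 / of_nat d)"
    by (simp add: cc sum_distrib_right sum_divide_distrib)
  also have "\<dots> = 1\<^sub>m d $$ (j,k)"
    using jk dpos by (simp add: rootsum)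
  finally show "(mat_adjoint (Gm f) * Gm f) $$ (j,k) = 1\<^sub>m d $$ (j,k)" .
qed (auto simp: Gm_def mat_adjoint_def)

definition Lm :: "(nat \<Rightarrow> real) \<Rightarrow> complex mat" where
  "Lm lam = mat d d (\<lambda>(i,j). if i = j then complex_of_real (lam i) else 0)"

lemma Lm_carrier: "Lm lam \<in> carrier_mat d d" by (simp add: Lm_def)

lemma Phi_ketbra:
  assumes f: "f \<in> carrier_vec d"
  shows "phase_damping d e lam (ketbra f f) = Gm f * Lm lam * mat_adjoint (Gm f)"
proof (rule eq_matI)
  note GC = Gm_carrier[of f]
  have GL: "Gm f * Lm lam \<in> carrier_mat d d" using GC Lm_carrier by auto
  fix a b assume ab: "a < dim_row (Gm f * Lm lam * mat_adjoint (Gm f))" "b < dim_col (Gm f * Lm lam * mat_adjoint (Gm f))"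
  hence ab: "a < d" "b < d" using GC by (auto simp: mat_adjoint_def)
  have PC: "\<And>j. phaseV d e ^\<^sub>m j \<in> carrier_mat d d" using V_carrier[OF ON] by simp
  have "phase_damping d e lam (ketbra f f) $$ (a,b) = (\<Sum>j<d. complex_of_real (lam j) * ketbra (phaseV d e ^\<^sub>m j *\<^sub>v f) (phaseV d e ^\<^sub>m j *\<^sub>v f) $$ (a,b))"
  proof -
    have "(complex_of_real (lam j) \<cdot>\<^sub>m (phaseV d e ^\<^sub>m j * ketbra f f * mat_adjoint (phaseV d e ^\<^sub>m j))) $$ (a,b)
      = complex_of_real (lam j) * ketbra (phaseV d e ^\<^sub>m j *\<^sub>v f) (phaseV d e ^\<^sub>m j *\<^sub>v f) $$ (a,b)" for j
      using ab PC[of j] by (simp only: sandwich[OF PC f], simp add: ketbra_def phaseV_def msum_def)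
    then show ?thesis unfolding phase_damping_def by (simp add: msum_entry[OF ab])
  qed
  also have "\<dots> = (\<Sum>j<d. Gm f $$ (a,j) * complex_of_real (lam j) * cnj (Gm f $$ (b,j)))"
    using ab f PC by (intro sum.cong refl, simp add: ketbra_def Gm_def mult_ac phaseV_def msum_def)
  also have "\<dots> = (Gm f * Lm lam * mat_adjoint (Gm f)) $$ (a,b)"
  proof -
    have "(Gm f * Lm lam * mat_adjoint (Gm f)) $$ (a,b) = (\<Sum>k<d. (Gm f * Lm lam) $$ (a,k) * mat_adjoint (Gm f) $$ (k,b))"
      using ab by (rule mult_entry[OF GL adj_carrier[OF GC]])
    also have "\<dots> = (\<Sum>k<d. (\<Sum>l<d. Gm f $$ (a,l) * Lm lam $$ (l,k)) * cnj (Gm f $$ (b,k)))"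
      using ab by (intro sum.cong refl, simp add: mult_entry[OF GC Lm_carrier] adj_entry[OF GC])
    also have "\<dots> = (\<Sum>k<d. Gm f $$ (a,k) * complex_of_real (lam k) * cnj (Gm f $$ (b,k)))"
      by (intro sum.cong refl, simp add: Lm_def if_distrib sum.delta cong: if_cong)
    finally show ?thesis by simp
  qed
  finally show "phase_damping d e lam (ketbra f f) $$ (a,b) = (Gm f * Lm lam * mat_adjoint (Gm f)) $$ (a,b)" .
qed (auto simp: phase_damping_def msum_def Gm_def mat_adjoint_def)

lemma vN_ketbra:
  assumes f: "f \<in> carrier_vec d" and mub: "\<forall>s<d. cmod (braket f (e s)) = 1 / sqrt (real d)"
  shows "vN_entropy (phase_damping d e lam (ketbra f f)) = - (\<Sum>j<d. lam j * ln (lam j))"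
proof -
  note GC = Gm_carrier[of f]
  have U1: "mat_adjoint (Gm f) * Gm f = 1\<^sub>m d" by (rule Gm_unitary[OF f mub])
  have U2: "Gm f * mat_adjoint (Gm f) = 1\<^sub>m d"
    by (rule mat_mult_left_right_inverse[OF adj_carrier[OF GC] GC U1])
  have AC: "phase_damping d e lam (ketbra f f) \<in> carrier_mat d d"
    by (simp add: phase_damping_def msum_carrier)
  have sim: "similar_mat (phase_damping d e lam (ketbra f f)) (Lm lam)"
    by (rule similar_matI[OF _ U2 U1 Phi_ketbra[OF f]]) (simp add: AC GC Lm_carrier adj_carrier[OF GC])
  have ut: "upper_triangular (Lm lam)" by (auto simp: upper_triangular_def Lm_def)
  have diag: "diag_mat (Lm lam) = map (\<lambda>i. complex_of_real (lam i)) [0..<d]"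
    by (auto simp: diag_mat_def Lm_def intro!: map_cong)
  have "char_poly (phase_damping d e lam (ketbra f f)) = char_poly (Lm lam)"
    by (rule char_poly_similar[OF sim])
  also have "\<dots> = (\<Prod>a\<leftarrow>diag_mat (Lm lam). [:- a, 1:])"
    by (rule char_poly_upper_triangular[OF Lm_carrier ut])
  finally have cp: "char_poly (phase_damping d e lam (ketbra f f)) = (\<Prod>a\<leftarrow>map (\<lambda>i. complex_of_real (lam i)) [0..<d]. [:- a, 1:])"
    using diag by simp
  have "(\<Sum>a\<leftarrow>map (\<lambda>i. complex_of_real (lam i)) [0..<d]. Re a * ln (Re a)) = (\<Sum>i\<leftarrow>[0..<d]. lam i * ln (lam i))"
    by (simp only: map_map o_def Re_complex_of_real)
  also have "\<dots> = (\<Sum>i = 0..<d. lam i * ln (lam i))"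
    by (simp only: interv_sum_list_conv_sum_set_nat set_upt)
  also have "\<dots> = (\<Sum>i<d. lam i * ln (lam i))"
    by (simp only: lessThan_atLeast0)
  finally have calc: "(\<Sum>a\<leftarrow>map (\<lambda>i. complex_of_real (lam i)) [0..<d]. Re a * ln (Re a)) = (\<Sum>i<d. lam i * ln (lam i))" .
  show ?thesis
    unfolding vN_char[OF AC cp] calc ..
qed

end



lemma xlnx_bound:
  fixes t B :: real
  assumes "\<bar>t\<bar> \<le> B"
  shows "t * ln t \<le> 1 + B^2"
proof (cases "t = 0")
  case True then show ?thesis by simp
next
  case False
  define s where "s = \<bar>t\<bar>"
  have s0: "s > 0" using False by (simp add: s_def)
  have lnts: "ln t = ln s" unfolding s_def by (cases "t \<ge> 0") (auto simp: ln_minus[of t, symmetric])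
  have tl: "t * ln t \<le> s * \<bar>ln s\<bar>"
    by (simp add: lnts s_def abs_mult[symmetric] del: abs_mult)
  have "s * \<bar>ln s\<bar> \<le> 1 + B^2"
  proof (cases "s \<ge> 1")
    case True
    have "0 \<le> ln s" using True by simp
    moreover have "ln s \<le> s - 1" using ln_le_minus_one s0 by blast
    ultimately have "s * \<bar>ln s\<bar> \<le> s * s" using s0 by (simp add: mult_left_mono)
    also have "\<dots> \<le> B * B" using mult_mono[OF assms assms order_trans[OF abs_ge_zero assms] abs_ge_zero] unfolding s_def .
    finally show ?thesis by (simp add: power2_eq_square)
  next
    case False
    have "ln s < 0" using False s0 by simp
    have "ln (1/s) \<le> 1/s - 1" using ln_le_minus_one s0 by simp
    hence "- ln s \<le> 1/s - 1" using s0 by (simp add: ln_div)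
    hence "s * (- ln s) \<le> s * (1/s - 1)" using s0 by (intro mult_left_mono) auto
    hence "s * \<bar>ln s\<bar> \<le> 1 - s" using s0 \<open>ln s < 0\<close> by (simp add: right_diff_distrib)
    then show ?thesis using s0 by (smt (verit) zero_le_power2)
  qed
  with tl show ?thesis by linarith
qed

lemma mult_bound:
  fixes A B :: "complex mat"
  assumes A: "A \<in> carrier_mat n n" and B: "B \<in> carrier_mat n n"
    and bA: "\<And>i j. i < n \<Longrightarrow> j < n \<Longrightarrow> cmod (A $$ (i,j)) \<le> \<alpha>"
    and bB: "\<And>i j. i < n \<Longrightarrow> j < n \<Longrightarrow> cmod (B $$ (i,j)) \<le> \<beta>"
    and ij: "i < n" "j < n"
  shows "cmod ((A * B) $$ (i,j)) \<le> real n * \<alpha> * \<beta>"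
proof -
  have "cmod ((A * B) $$ (i,j)) = cmod (\<Sum>k<n. A $$ (i,k) * B $$ (k,j))"
    using mult_entry[OF A B ij] by simp
  also have "\<dots> \<le> (\<Sum>k<n. cmod (A $$ (i,k) * B $$ (k,j)))" by (rule norm_sum)
  also have "\<dots> \<le> (\<Sum>k<n. \<alpha> * \<beta>)"
  proof (rule sum_mono)
    fix k assume "k \<in> {..<n}"
    hence k: "k < n" by simp
    have "cmod (A $$ (i,k) * B $$ (k,j)) = cmod (A $$ (i,k)) * cmod (B $$ (k,j))" by (simp add: norm_mult)
    also have "\<dots> \<le> \<alpha> * \<beta>"
      by (rule mult_mono, auto intro: bA bB k ij order_trans[OF norm_ge_zero bA[OF ij(1) k]])
    finally show "cmod (A $$ (i,k) * B $$ (k,j)) \<le> \<alpha> * \<beta>" .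
  qed
  also have "\<dots> = real n * \<alpha> * \<beta>" by simp
  finally show ?thesis .
qed

lemma eig_bound:
  fixes A :: "complex mat"
  assumes A: "A \<in> carrier_mat n n"
    and bA: "\<And>i j. i < n \<Longrightarrow> j < n \<Longrightarrow> cmod (A $$ (i,j)) \<le> K"
    and a: "a \<in> set (eigvals A)"
  shows "cmod a \<le> real n * K"
proof -
  have ex: "\<exists>as. char_poly A = (\<Prod>a\<leftarrow>as. [:- a, 1:]) \<and> length as = dim_row A"
    using char_poly_factorized[OF A] A by auto
  from someI_ex[OF ex] have cp: "char_poly A = (\<Prod>a\<leftarrow>eigvals A. [:- a, 1:])"
    unfolding eigvals_def by blast
  have "poly (char_poly A) a = 0" unfolding cp using a by (rule linear_poly_root)
  hence "eigenvalue A a" using eigenvalue_root_char_poly[OF A] by simp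
  then obtain v where ev: "eigenvector A v a" unfolding eigenvalue_def by blast
  have v: "v \<in> carrier_vec n" and vnz: "v \<noteq> 0\<^sub>v n" and Av: "A *\<^sub>v v = a \<cdot>\<^sub>v v"
    using ev A unfolding eigenvector_def by auto
  define N where "N = (\<Sum>k<n. cmod (v $ k))"
  obtain k where k: "k < n" "v $ k \<noteq> 0"
    using vnz v by (metis eq_vecI index_zero_vec(1) index_zero_vec(2) carrier_vecD)
  have "cmod (v $ k) \<le> N" unfolding N_def using k by (intro member_le_sum) auto
  hence Npos: "N > 0" using k by (smt (verit) zero_less_norm_iff)
  have "cmod a * N = (\<Sum>i<n. cmod ((A *\<^sub>v v) $ i))"
    unfolding N_def sum_distrib_left using Av v by (intro sum.cong refl) (simp add: norm_mult)
  also have "\<dots> \<le> (\<Sum>i<n. \<Sum>k<n. K * cmod (v $ k))"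
  proof (rule sum_mono)
    fix i assume "i \<in> {..<n}"
    hence i: "i < n" by simp
    have "cmod ((A *\<^sub>v v) $ i) = cmod (\<Sum>k<n. A $$ (i,k) * v $ k)" using mv_entry[OF A v i] by simp
    also have "\<dots> \<le> (\<Sum>k<n. cmod (A $$ (i,k) * v $ k))" by (rule norm_sum)
    also have "\<dots> \<le> (\<Sum>k<n. K * cmod (v $ k))"
      by (rule sum_mono, simp add: norm_mult, rule mult_right_mono, auto intro: bA i)
    finally show "cmod ((A *\<^sub>v v) $ i) \<le> (\<Sum>k<n. K * cmod (v $ k))" .
  qed
  also have "\<dots> = (real n * K) * N" by (simp add: N_def sum_distrib_left mult.assoc)
  finally show ?thesis using Npos by simp
qed

lemma vN_lower:
  fixes A :: "complex mat"
  assumes A: "A \<in> carrier_mat n n"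
    and bA: "\<And>i j. i < n \<Longrightarrow> j < n \<Longrightarrow> cmod (A $$ (i,j)) \<le> K"
  shows "vN_entropy A \<ge> - (real n * (1 + (real n * K)^2))"
proof -
  have ex: "\<exists>as. char_poly A = (\<Prod>a\<leftarrow>as. [:- a, 1:]) \<and> length as = dim_row A"
    using char_poly_factorized[OF A] A by auto
  from someI_ex[OF ex] have len: "length (eigvals A) = n"
    unfolding eigvals_def using A by auto
  have "(\<Sum>a\<leftarrow>eigvals A. Re a * ln (Re a)) \<le> (\<Sum>a\<leftarrow>eigvals A. 1 + (real n * K)^2)"
  proof (rule sum_list_mono)
    fix a assume a: "a \<in> set (eigvals A)"
    have "\<bar>Re a\<bar> \<le> real n * K" using eig_bound[OF A bA a] abs_Re_le_cmod by (rule order_trans[rotated])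
    then show "Re a * ln (Re a) \<le> 1 + (real n * K)^2" by (rule xlnx_bound)
  qed
  also have "\<dots> = real n * (1 + (real n * K)^2)" by (simp add: sum_list_triv len)
  finally show ?thesis unfolding vN_entropy_def by simp
qed

lemma sum_two_delta:
  fixes g h :: "nat \<Rightarrow> complex"
  assumes "a < d" "b < d"
  shows "(\<Sum>k<d. g k * ((if k = a then 1 else 0) + (if k = b then x else 0))) = g a + g b * x"
proof -
  have "(\<Sum>k<d. g k * ((if k = a then 1 else 0) + (if k = b then x else 0)))
      = (\<Sum>k<d. (if k = a then g k else 0)) + (\<Sum>k<d. (if k = b then g k * x else 0))"
    by (subst sum.distrib[symmetric], intro sum.cong refl, simp add: distrib_left)
  also have "\<dots> = g a + g b * x" using assms by (simp add: sum.delta)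
  finally show ?thesis .
qed

lemma quad2:
  fixes \<sigma> :: "complex mat" and x :: complex
  assumes S: "\<sigma> \<in> carrier_mat d d" and ab: "a < d" "b < d"
  defines "v \<equiv> vec d (\<lambda>i. (if i = a then 1 else 0) + (if i = b then x else 0))"
  shows "braket v (\<sigma> *\<^sub>v v) = \<sigma> $$ (a,a) + \<sigma> $$ (b,a) * cnj x + (\<sigma> $$ (a,b) + \<sigma> $$ (b,b) * cnj x) * x"
proof -
  have v: "v \<in> carrier_vec d" by (simp add: v_def)
  have w: "(\<sigma> *\<^sub>v v) $ i = \<sigma> $$ (i,a) + \<sigma> $$ (i,b) * x" if i: "i < d" for i
    using mv_entry[OF S v i] sum_two_delta[OF ab, of "\<lambda>k. \<sigma> $$ (i,k)" x] by (simp add: v_def)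
  have "braket v (\<sigma> *\<^sub>v v) = (\<Sum>i<d. cnj (v $ i) * (\<sigma> *\<^sub>v v) $ i)" by (rule braket_carrier[OF v])
  also have "\<dots> = (\<Sum>i<d. (\<sigma> $$ (i,a) + \<sigma> $$ (i,b) * x) * ((if i = a then 1 else 0) + (if i = b then cnj x else 0)))"
  proof (intro sum.cong refl)
    fix i assume "i \<in> {..<d}"
    hence i: "i < d" by simp
    have ci: "cnj (v $ i) = (if i = a then 1 else 0) + (if i = b then cnj x else 0)"
      using i by (simp add: v_def)
    show "cnj (v $ i) * (\<sigma> *\<^sub>v v) $ i = (\<sigma> $$ (i,a) + \<sigma> $$ (i,b) * x) * ((if i = a then 1 else 0) + (if i = b then cnj x else 0))"
      unfolding ci w[OF i] by (rule mult.commute)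
  qed
  also have "\<dots> = (\<sigma> $$ (a,a) + \<sigma> $$ (a,b) * x) + (\<sigma> $$ (b,a) + \<sigma> $$ (b,b) * x) * cnj x"
    by (rule sum_two_delta[OF ab])
  finally show ?thesis by (simp add: algebra_simps)
qed

lemma quad1:
  fixes \<sigma> :: "complex mat"
  assumes S: "\<sigma> \<in> carrier_mat d d" and a: "a < d"
  shows "braket (vec d (\<lambda>i. (if i = a then 1 else 0) + (if i = a then 0 else 0))) (\<sigma> *\<^sub>v vec d (\<lambda>i. (if i = a then 1 else 0) + (if i = a then 0 else 0))) = \<sigma> $$ (a,a)"
  using quad2[OF S a a, of 0] by simp

lemma density_entry:
  assumes D: "density d \<sigma>" and ab: "a < d" "b < d"
  shows "cmod (\<sigma> $$ (a,b)) \<le> 2"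
proof -
  have S: "\<sigma> \<in> carrier_mat d d" and pos: "\<And>v. v \<in> carrier_vec d \<Longrightarrow> Im (braket v (\<sigma> *\<^sub>v v)) = 0 \<and> Re (braket v (\<sigma> *\<^sub>v v)) \<ge> 0"
    and tr: "mtrace \<sigma> = 1" using D unfolding density_def positive_op_def by auto
  have diag: "Im (\<sigma> $$ (c,c)) = 0 \<and> Re (\<sigma> $$ (c,c)) \<ge> 0" if c: "c < d" for c
    using pos[of "vec d (\<lambda>i. (if i = c then 1 else 0) + (if i = c then 0 else 0))"] quad1[OF S c] by simp
  have "(\<Sum>i<d. \<sigma> $$ (i,i)) = 1" using tr S by (simp add: mtrace_def)
  hence "(\<Sum>i<d. Re (\<sigma> $$ (i,i))) = 1" by (metis Re_sum one_complex.simps(1))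
  hence diag1: "Re (\<sigma> $$ (c,c)) \<le> 1" if c: "c < d" for c
    using member_le_sum[of c "{..<d}" "\<lambda>i. Re (\<sigma> $$ (i,i))"] diag c by auto
  show ?thesis
  proof (cases "a = b")
    case True
    then show ?thesis using cmod_le[of "\<sigma> $$ (a,b)"] diag[OF ab(1)] diag1[OF ab(1)] by auto
  next
    case False
    define P where "P = \<sigma> $$ (a,b)"
    define R where "R = \<sigma> $$ (b,a)"
    have q: "Im (\<sigma> $$ (a,a) + R * cnj x + (P + \<sigma> $$ (b,b) * cnj x) * x) = 0 \<and>
             Re (\<sigma> $$ (a,a) + R * cnj x + (P + \<sigma> $$ (b,b) * cnj x) * x) \<ge> 0" for x
      using pos[of "vec d (\<lambda>i. (if i = a then 1 else 0) + (if i = b then x else 0))"] quad2[OF S ab, of x]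
      by (simp add: P_def R_def)
    have da: "Im (\<sigma> $$ (a,a)) = 0" "Re (\<sigma> $$ (a,a)) \<ge> 0" "Re (\<sigma> $$ (a,a)) \<le> 1"
      using diag[OF ab(1)] diag1[OF ab(1)] by auto
    have db: "Im (\<sigma> $$ (b,b)) = 0" "Re (\<sigma> $$ (b,b)) \<ge> 0" "Re (\<sigma> $$ (b,b)) \<le> 1"
      using diag[OF ab(2)] diag1[OF ab(2)] by auto
    have q1: "Im R + Im P = 0" "Re (\<sigma> $$ (a,a)) + Re R + Re P + Re (\<sigma> $$ (b,b)) \<ge> 0"
      using q[of 1] da db by auto
    have q2: "Re (\<sigma> $$ (a,a)) - Re R - Re P + Re (\<sigma> $$ (b,b)) \<ge> 0"
      using q[of "-1"] da db by auto
    have q3: "Re P - Re R = 0" "Re (\<sigma> $$ (a,a)) + Im R - Im P + Re (\<sigma> $$ (b,b)) \<ge> 0"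
      using q[of "\<i>"] da db by (auto simp: algebra_simps)
    have q4: "Re (\<sigma> $$ (a,a)) - Im R + Im P + Re (\<sigma> $$ (b,b)) \<ge> 0"
      using q[of "-\<i>"] da db by (auto simp: algebra_simps)
    have "\<bar>Re P\<bar> \<le> 1" "\<bar>Im P\<bar> \<le> 1" using q1 q2 q3 q4 da db by linarith+
    then show ?thesis using cmod_le[of P] unfolding P_def by linarith
  qed
qed

context
  fixes d :: nat and e :: "nat \<Rightarrow> complex vec"
  assumes ON: "orthonormal_basis d e" and dpos: "d > 0"
begin

lemma e_entry_bound: assumes s: "s < d" and a: "a < d" shows "cmod (e s $ a) \<le> 1"
proof -
  have "(\<Sum>i<d. cnj (e s $ i) * e s $ i) = 1" using e_orth[OF ON s s] by simp
  moreover have "cnj (e s $ i) * e s $ i = complex_of_real (cmod (e s $ i) ^ 2)" for i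
    by (metis complex_norm_square mult.commute)
  ultimately have "complex_of_real (\<Sum>i<d. cmod (e s $ i) ^ 2) = 1" by simp
  hence "(\<Sum>i<d. cmod (e s $ i) ^ 2) = 1" using of_real_eq_1_iff by blast
  hence "cmod (e s $ a) ^ 2 \<le> 1" using member_le_sum[of a "{..<d}" "\<lambda>i. cmod (e s $ i) ^ 2"] a by auto
  thus ?thesis by (simp add: power_le_one_iff)
qed

lemma Vpow_bound: assumes ab: "a < d" "b < d" shows "cmod ((phaseV d e ^\<^sub>m j) $$ (a,b)) \<le> real d"
proof -
  have "cmod ((phaseV d e ^\<^sub>m j) $$ (a,b)) = cmod (\<Sum>s<d. w d s ^ j * (e s $ a * cnj (e s $ b)))"
    using Vpow_entry[OF ON ab] by simp
  also have "\<dots> \<le> (\<Sum>s<d. cmod (w d s ^ j * (e s $ a * cnj (e s $ b))))" by (rule norm_sum)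
  also have "\<dots> \<le> (\<Sum>s<d. 1)"
  proof (rule sum_mono)
    fix s assume "s \<in> {..<d}" hence s: "s < d" by simp
    have "cmod (w d s ^ j * (e s $ a * cnj (e s $ b))) = cmod (e s $ a) * cmod (e s $ b)"
      by (simp add: norm_mult norm_power w_cis norm_cis)
    also have "\<dots> \<le> 1 * 1" by (rule mult_mono, auto intro: e_entry_bound s ab)
    finally show "cmod (w d s ^ j * (e s $ a * cnj (e s $ b))) \<le> 1" by simp
  qed
  finally show ?thesis by simp
qed

lemma Phi_bound:
  assumes D: "density d \<sigma>" and lam: "\<forall>s<d. lam s \<ge> 0" "(\<Sum>s<d. lam s) = 1"
    and ab: "a < d" "b < d"
  shows "cmod (phase_damping d e lam \<sigma> $$ (a,b)) \<le> real d * (real d * (real d * real d * 2) * real d)"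
proof -
  let ?K = "real d * (real d * real d * 2) * real d"
  have S: "\<sigma> \<in> carrier_mat d d" using D unfolding density_def positive_op_def by auto
  have PC: "\<And>j. phaseV d e ^\<^sub>m j \<in> carrier_mat d d" using V_carrier[OF ON] by simp
  have M: "\<And>j. phaseV d e ^\<^sub>m j * \<sigma> * mat_adjoint (phaseV d e ^\<^sub>m j) \<in> carrier_mat d d"
    using PC S adj_carrier by (meson mult_carrier_mat)
  have bound1: "cmod ((phaseV d e ^\<^sub>m j * \<sigma> * mat_adjoint (phaseV d e ^\<^sub>m j)) $$ (a,b)) \<le> ?K" for j
  proof -
    have b1: "cmod ((phaseV d e ^\<^sub>m j * \<sigma>) $$ (i,k)) \<le> real d * real d * 2" if "i < d" "k < d" for i k
      by (rule mult_bound[OF PC S Vpow_bound density_entry[OF D]], auto simp: that)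
    have b2: "cmod (mat_adjoint (phaseV d e ^\<^sub>m j) $$ (i,k)) \<le> real d" if "i < d" "k < d" for i k
      using adj_entry[OF PC that] Vpow_bound[OF that(2,1)] by simp
    show ?thesis
      by (rule mult_bound[OF mult_carrier_mat[OF PC S] adj_carrier[OF PC] b1 b2 ab])
  qed
  have lam1: "lam j \<le> 1" if "j < d" for j
    using member_le_sum[of j "{..<d}" lam] lam that by auto
  have "phase_damping d e lam \<sigma> $$ (a,b) = (\<Sum>j<d. complex_of_real (lam j) * (phaseV d e ^\<^sub>m j * \<sigma> * mat_adjoint (phaseV d e ^\<^sub>m j)) $$ (a,b))"
  proof -
    have dims: "dim_row (phaseV d e ^\<^sub>m j * \<sigma> * mat_adjoint (phaseV d e ^\<^sub>m j)) = d"
      "dim_col (phaseV d e ^\<^sub>m j * \<sigma> * mat_adjoint (phaseV d e ^\<^sub>m j)) = d" for j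
      using M[of j] by auto
    show ?thesis unfolding phase_damping_def using ab by (simp add: msum_entry dims del: index_mult_mat)
  qed
  hence "cmod (phase_damping d e lam \<sigma> $$ (a,b)) \<le> (\<Sum>j<d. cmod (complex_of_real (lam j) * (phaseV d e ^\<^sub>m j * \<sigma> * mat_adjoint (phaseV d e ^\<^sub>m j)) $$ (a,b)))"
    using norm_sum by simp
  also have "\<dots> \<le> (\<Sum>j<d. ?K)"
  proof (rule sum_mono)
    fix j assume "j \<in> {..<d}" hence j: "j < d" by simp
    have "cmod (complex_of_real (lam j) * (phaseV d e ^\<^sub>m j * \<sigma> * mat_adjoint (phaseV d e ^\<^sub>m j)) $$ (a,b))
        = lam j * cmod ((phaseV d e ^\<^sub>m j * \<sigma> * mat_adjoint (phaseV d e ^\<^sub>m j)) $$ (a,b))"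
      using lam j by (simp add: norm_mult)
    also have "\<dots> \<le> 1 * ?K" by (rule mult_mono, auto intro: lam1 j bound1 simp: lam(1)[rule_format, OF j])
    finally show "cmod (complex_of_real (lam j) * (phaseV d e ^\<^sub>m j * \<sigma> * mat_adjoint (phaseV d e ^\<^sub>m j)) $$ (a,b)) \<le> ?K" by simp
  qed
  also have "\<dots> = real d * ?K" by simp
  finally show ?thesis .
qed

end

lemma ketbra_density:
  assumes ON: "orthonormal_basis d e" and dpos: "d > 0"
    and f: "f \<in> carrier_vec d" and mub: "\<forall>s<d. cmod (braket f (e s)) = 1 / sqrt (real d)"
  shows "density d (ketbra f f)"
proof -
  have K: "ketbra f f \<in> carrier_mat d d" by (rule ketbra_carrier[OF f])
  have GC: "Gm d e f \<in> carrier_mat d d" by (rule Gm_carrier[OF ON dpos])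
  have U: "mat_adjoint (Gm d e f) * Gm d e f = 1\<^sub>m d" by (rule Gm_unitary[OF ON dpos f mub])
  have V0: "(phaseV d e ^\<^sub>m 0 *\<^sub>v f) = f" using V_carrier[OF ON] f by auto
  have G0: "Gm d e f $$ (a,0) = f $ a" if "a < d" for a
    using that dpos V0 by (simp add: Gm_def[OF ON dpos])
  have "(mat_adjoint (Gm d e f) * Gm d e f) $$ (0,0) = (\<Sum>a<d. cnj (f $ a) * f $ a)"
    using dpos by (subst mult_entry[OF adj_carrier[OF GC] GC], auto intro!: sum.cong simp: adj_entry[OF GC] G0)
  hence nrm: "(\<Sum>a<d. cnj (f $ a) * f $ a) = 1" using U dpos by simp
  have tr: "mtrace (ketbra f f) = 1"
    unfolding mtrace_def using K f nrm by (simp add: ketbra_entry mult.commute)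
  have pos: "Im (braket v (ketbra f f *\<^sub>v v)) = 0 \<and> Re (braket v (ketbra f f *\<^sub>v v)) \<ge> 0"
    if v: "v \<in> carrier_vec d" for v
  proof -
    have Kv: "(ketbra f f *\<^sub>v v) $ i = f $ i * braket f v" if i: "i < d" for i
      using mv_entry[OF K v i] i f by (simp add: ketbra_entry braket_carrier sum_distrib_left mult_ac)
    have "braket v (ketbra f f *\<^sub>v v) = (\<Sum>i<d. cnj (v $ i) * (f $ i * braket f v))"
      using v Kv by (simp add: braket_carrier)
    also have "\<dots> = (\<Sum>i<d. cnj (v $ i) * f $ i) * braket f v"
      by (simp add: sum_distrib_right mult.assoc)
    also have "(\<Sum>i<d. cnj (v $ i) * f $ i) = cnj (braket f v)"
      using f by (simp add: braket_carrier cnj_sum mult.commute)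
    also have "cnj (braket f v) * braket f v = complex_of_real (cmod (braket f v) ^ 2)"
      by (metis complex_norm_square mult.commute)
    finally show ?thesis by simp
  qed
  show ?thesis unfolding density_def positive_op_def using K pos tr by auto
qed

theorem proposition1:
  fixes d :: nat and e :: "nat \<Rightarrow> complex vec" and lam :: "nat \<Rightarrow> real" and \<rho> :: "complex mat"
  assumes "d > 0"
    and "orthonormal_basis d e"
    and "\<forall>s<d. lam s \<ge> 0" and "(\<Sum>s<d. lam s) = 1"
    and "\<rho> \<in> mub_states d e"
  shows "H_Phi d (phase_damping d e lam) \<rho> \<le> - (\<Sum>j<d. lam j * ln (lam j))"
proof -
  note dpos = assms(1) and ON = assms(2) and lam = assms(3,4)
  define h where "h = - (\<Sum>j<d. lam j * ln (lam j))"
  define S where "S = {(\<Sum>j<k. p j * vN_entropy (phase_damping d e lam (\<sigma> j))) | k p \<sigma>.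
      (\<forall>j<k. p j \<ge> 0 \<and> density d (\<sigma> j)) \<and> (\<Sum>j<k. p j) = 1 \<and>
      \<rho> = msum d k (\<lambda>j. complex_of_real (p j) \<cdot>\<^sub>m \<sigma> j)}"
  define K where "K = real d * (real d * (real d * real d * 2) * real d)"
  define C where "C = real d * (1 + (real d * K)^2)"
  have vNb: "vN_entropy (phase_damping d e lam \<sigma>) \<ge> - C" if D: "density d \<sigma>" for \<sigma>
    unfolding C_def
    by (rule vN_lower[of _ d], simp add: phase_damping_def msum_carrier,
        unfold K_def, rule Phi_bound[OF ON dpos D lam], auto)
  have bdd: "bdd_below S"
  proof (rule bdd_belowI)
    fix x assume "x \<in> S"
    then have "\<exists>k p \<sigma>. x = (\<Sum>j<k. p j * vN_entropy (phase_damping d e lam (\<sigma> j))) \<and>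
      ((\<forall>j<k. p j \<ge> 0 \<and> density d (\<sigma> j)) \<and> (\<Sum>j<k. p j) = 1 \<and>
      \<rho> = msum d k (\<lambda>j. complex_of_real (p j) \<cdot>\<^sub>m \<sigma> j))"
      unfolding S_def by (simp only: mem_Collect_eq)
    then obtain k :: nat and p \<sigma> where x: "x = (\<Sum>j<k. p j * vN_entropy (phase_damping d e lam (\<sigma> j)))"
      and ps: "\<forall>j<k. p j \<ge> 0 \<and> density d (\<sigma> j)" and p1: "(\<Sum>j<k. p j) = 1"
      by blast
    have "(\<Sum>j<k. p j * (- C)) \<le> x"
      unfolding x
    proof (rule sum_mono)
      fix j assume "j \<in> {..<k}"
      hence "p j \<ge> 0" "density d (\<sigma> j)" using ps by auto
      thus "p j * (- C) \<le> p j * vN_entropy (phase_damping d e lam (\<sigma> j))"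
        using vNb by (intro mult_left_mono) auto
    qed
    moreover have "(\<Sum>j<k. p j * (- C)) = - C" using p1 by (simp only: sum_distrib_right[symmetric])
    ultimately show "- C \<le> x" by simp
  qed
  obtain k p f where rho: "\<rho> = msum d k (\<lambda>j. complex_of_real (p j) \<cdot>\<^sub>m ketbra (f j) (f j))"
    and pf: "\<forall>j<k. p j \<ge> 0 \<and> f j \<in> carrier_vec d \<and> (\<forall>s<d. cmod (braket (f j) (e s)) = 1 / sqrt (real d))"
    and p1: "(\<Sum>j<k. p j) = 1"
    using assms(5) unfolding mub_states_def by blast
  have dens: "\<forall>j<k. p j \<ge> 0 \<and> density d (ketbra (f j) (f j))"
    using pf ketbra_density[OF ON dpos] by blast
  have vals: "(\<Sum>j<k. p j * vN_entropy (phase_damping d e lam (ketbra (f j) (f j)))) = h"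
  proof -
    have "(\<Sum>j<k. p j * vN_entropy (phase_damping d e lam (ketbra (f j) (f j)))) = (\<Sum>j<k. p j * h)"
      using pf by (intro sum.cong refl) (simp add: vN_ketbra[OF ON dpos] h_def)
    also have "\<dots> = h" using p1 by (simp only: sum_distrib_right[symmetric])
    finally show ?thesis .
  qed
  have "h \<in> S" unfolding S_def mem_Collect_eq
    by (rule exI[of _ k], rule exI[of _ p], rule exI[of _ "\<lambda>j. ketbra (f j) (f j)"])
       (use dens p1 rho vals in simp)
  hence "Inf S \<le> h" using bdd by (rule cInf_lower)
  thus ?thesis unfolding H_Phi_def S_def h_def .
qed


end
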